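(* Let $J_j(x)=\tfrac{c_j}{2}x^2+\bar c_jx$ with $c_j>0$, and let $\rho>0$. Consider the system in the variables $z=(\hat q,\tilde\theta)\in\mathbb{R}^n\times\mathbb{R}^{|\mathcal E|}$ and $\sigma=(\lambda,\omega,\alpha,\eta)\in\mathbb{R}\times\mathbb{R}^n\times\mathbb{R}^n\times\mathbb{R}^{2|\mathcal E|}$, with $\pi:=\lambda\mathbf 1-H\eta-\omega$ and $q:=\tfrac1\rho(\pi-\alpha)+\hat q$: \[ \dot{\tilde\theta}=C^T\omega,\qquad M\dot\omega=q-d-D\omega-CB\tilde\theta, \] \[ \tau^\alpha_j\dot\alpha_j=q_j-\frac{\pi_j-\bar c_j}{c_j}\ (j=1,\dots,n),\qquad T^{\hat q}\dot{\hat q}=\pi-\alpha, \] \[ T^\lambda\dot\lambda=-\mathbf 1^T(q-d),\qquad T^\eta\dot\eta=\big[H^T(q-d)-F\big]^+_\eta, \] with initial points satisfying $\eta(0)\ge0$. Then a point $(z^*,\sigma^* )$ (with $\eta^*\ge0$) is an equilibrium of this system if and only if, setting $p^*_j:=(\pi^*_j-\bar c_j)/c_j$ with $\pi^*=\lambda^*\mathbf 1-H\eta^*-\omega^*$, $q^*:=\tfrac1\rho(\pi^*-\alpha^* )+\hat q^*$ and $\nu^*:=\omega^*$, the tuple $(p^*,q^*,\omega^*,\tilde\theta^*,\alpha^*,\lambda^*,\eta^*,\nu^* )$ is an optimal primal-dual solution of the planner's problem \[ \min_{p,q,\omega\in\mathbb{R}^n,\,\tilde\theta\in\mathbb{R}^{|\mathcal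 E|}}\ \sum_jJ_j(p_j)+\tfrac12\omega^TD\omega \] subject to $q=p$ (multiplier $\alpha$), $\mathbf 1^T(q-d)=0$ (multiplier $\lambda$), $H^T(q-d)\le F$ (multiplier $\eta\ge0$), $q-d-D\omega-CB\tilde\theta=0$ (multiplier $\nu$).
   Context: $(\mathcal N,\mathcal E)$ is a connected directed graph with $\mathcal N=\{1,\dots,n\}$; $C$ is its incidence matrix ($C_{j,e}=1$ if $e=(j,k)$, $-1$ if $e=(k,j)$, $0$ otherwise). $B$, $D$, $M$ are diagonal with positive diagonal entries; $T^{\hat q},T^\lambda,T^\eta$ are diagonal (or positive scalar) with positive entries, and $\tau^\alpha_j>0$. $L:=CBC^T$, $H\in\mathbb{R}^{n\times2|\mathcal E|}$ with $H^T=\begin{bmatrix} BC^TL^\dagger\\ -BC^TL^\dagger\end{bmatrix}$ ($L^\dagger$ Moore–Penrose inverse), $F=\begin{bmatrix}\overline F\\-\underline F\end{bmatrix}$, $d\in\mathbb{R}^n$ given. Projection: for vectors $y,u$, $([y]^+_u)_e=y_e$ if $y_e>0$ or $u_e>0$, and $0$ otherwise. Optimal primal-dual solutions are with respect to the Lagrangian $\sum_jJ_j(p_j)+\tfrac12\omega^TD\omega+\nu^T(q-d-D\omega-CB\tilde\theta)+\alpha^T(q-p)-\lambda\mathbf 1^T(q-d)+\eta^T(H^T(q-d)-F)$. (The system models linearized swing dynamics, generators' price-bid updates comparing dispatch with their profit-maximizing output at price $\pi$, and regularized market dispatch/pricing with virtual dispatch $\hat q$.) *)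

theory Defs
  imports "HOL-Analysis.Analysis"
begin

definition incidence :: "('e::finite \<Rightarrow> 'n::finite) \<Rightarrow> ('e \<Rightarrow> 'n) \<Rightarrow> real^'e^'n" where
  "incidence src tgt = (\<chi> j e. if j = src e then 1 else if j = tgt e then -1 else 0)"

definition graph_connected :: "('e \<Rightarrow> 'n) \<Rightarrow> ('e \<Rightarrow> 'n) \<Rightarrow> bool" where
  "graph_connected src tgt \<longleftrightarrow>
     (\<forall>i j. (i, j) \<in> ({(src e, tgt e) | e. True} \<union> {(tgt e, src e) | e. True})\<^sup>*)"

definition diag_mat :: "real^'k::finite \<Rightarrow> real^'k^'k" where
  "diag_mat v = (\<chi> i j. if i = j then v $ i else 0)"

definition mp_pinv :: "real^'m::finite^'k::finite \<Rightarrow> real^'k^'m" where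
  "mp_pinv A = (THE X. A ** X ** A = A \<and> X ** A ** X = X \<and>
                      transpose (A ** X) = A ** X \<and> transpose (X ** A) = X ** A)"

definition ones :: "real^'k::finite" where
  "ones = (\<chi> i. 1)"

text \<open>The matrix H^T in R^{2|E| x n}: rows indexed by Inl e are those of B C^T L^dagger,
  rows indexed by Inr e are those of - B C^T L^dagger, where L = C B C^T.\<close>
definition HT_mat :: "('e::finite \<Rightarrow> 'n::finite) \<Rightarrow> ('e \<Rightarrow> 'n) \<Rightarrow> real^'e \<Rightarrow> real^'n^('e + 'e)" where
  "HT_mat src tgt b =
     (let C = incidence src tgt;
          G = diag_mat b ** transpose C ** mp_pinv (C ** diag_mat b ** transpose C)
      in (\<chi> k. case k of Inl e \<Rightarrow> G $ e | Inr e \<Rightarrow> - (G $ e)))"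

definition H_mat :: "('e::finite \<Rightarrow> 'n::finite) \<Rightarrow> ('e \<Rightarrow> 'n) \<Rightarrow> real^'e \<Rightarrow> real^('e + 'e)^'n" where
  "H_mat src tgt b = transpose (HT_mat src tgt b)"

definition F_vec :: "real^'e::finite \<Rightarrow> real^'e \<Rightarrow> real^('e + 'e)" where
  "F_vec Fup Flo = (\<chi> k. case k of Inl e \<Rightarrow> Fup $ e | Inr e \<Rightarrow> - (Flo $ e))"

definition proj_plus :: "real^'k::finite \<Rightarrow> real^'k \<Rightarrow> real^'k" where
  "proj_plus y u = (\<chi> k. if y $ k > 0 \<or> u $ k > 0 then y $ k else 0)"

definition price :: "real^('e::finite + 'e)^'n::finite \<Rightarrow> real \<Rightarrow> real^('e + 'e) \<Rightarrow> real^'n \<Rightarrow> real^'n" where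
  "price H lam eta omega = lam *s ones - H *v eta - omega"

definition dispatch :: "real \<Rightarrow> real^'n::finite \<Rightarrow> real^'n \<Rightarrow> real^'n \<Rightarrow> real^'n" where
  "dispatch rho pr alpha qh = (1 / rho) *s (pr - alpha) + qh"

definition vector_field ::
  "('e::finite \<Rightarrow> 'n::finite) \<Rightarrow> ('e \<Rightarrow> 'n) \<Rightarrow> real^'e \<Rightarrow> real^'n \<Rightarrow> real^'n \<Rightarrow>
   real^'n \<Rightarrow> real^'n \<Rightarrow> real \<Rightarrow> real^('e + 'e) \<Rightarrow>
   real^'n \<Rightarrow> real^'n \<Rightarrow> real^'n \<Rightarrow> real^'e \<Rightarrow> real^'e \<Rightarrow> real \<Rightarrow>
   real^'n \<Rightarrow> real^'e \<Rightarrow> real \<Rightarrow> real^'n \<Rightarrow> real^'n \<Rightarrow> real^('e + 'e) \<Rightarrow>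
   ((real^'e) \<times> (real^'n) \<times> (real^'n) \<times> (real^'n) \<times> real \<times> (real^('e + 'e)))" where
  "vector_field src tgt b dv mv tq ta tlam te c cbar d Fup Flo rho qh theta lam omega alpha eta =
     (let C = incidence src tgt; H = H_mat src tgt b; HT = HT_mat src tgt b;
          F = F_vec Fup Flo;
          pr = price H lam eta omega;
          q = dispatch rho pr alpha qh;
          r = q - d - diag_mat dv *v omega - (C ** diag_mat b) *v theta
      in ( transpose C *v omega,
           (\<chi> j. r $ j / mv $ j),
           (\<chi> j. (q $ j - (pr $ j - cbar $ j) / c $ j) / ta $ j),
           (\<chi> j. (pr - alpha) $ j / tq $ j),
           - (ones \<bullet> (q - d)) / tlam,
           (\<chi> k. proj_plus (HT *v (q - d) - F) eta $ k / te $ k)))"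

definition is_equilibrium where
  "is_equilibrium src tgt b dv mv tq ta tlam te c cbar d Fup Flo rho qh theta lam omega alpha eta \<longleftrightarrow>
     vector_field src tgt b dv mv tq ta tlam te c cbar d Fup Flo rho qh theta lam omega alpha eta
       = (0, 0, 0, 0, 0, 0)"

definition gen_cost :: "real \<Rightarrow> real \<Rightarrow> real \<Rightarrow> real" where
  "gen_cost cj cbarj x = cj / 2 * x^2 + cbarj * x"

definition lagrangian ::
  "('e::finite \<Rightarrow> 'n::finite) \<Rightarrow> ('e \<Rightarrow> 'n) \<Rightarrow> real^'e \<Rightarrow> real^'n \<Rightarrow>
   real^'n \<Rightarrow> real^'n \<Rightarrow> real^'n \<Rightarrow> real^'e \<Rightarrow> real^'e \<Rightarrow>
   real^'n \<Rightarrow> real^'n \<Rightarrow> real^'n \<Rightarrow> real^'e \<Rightarrow>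
   real^'n \<Rightarrow> real \<Rightarrow> real^('e + 'e) \<Rightarrow> real^'n \<Rightarrow> real" where
  "lagrangian src tgt b dv c cbar d Fup Flo p q omega theta alpha lam eta nu =
     (let C = incidence src tgt; HT = HT_mat src tgt b; F = F_vec Fup Flo
      in (\<Sum>j\<in>UNIV. gen_cost (c $ j) (cbar $ j) (p $ j))
         + 1/2 * (omega \<bullet> (diag_mat dv *v omega))
         + nu \<bullet> (q - d - diag_mat dv *v omega - (C ** diag_mat b) *v theta)
         + alpha \<bullet> (q - p)
         - lam * (ones \<bullet> (q - d))
         + eta \<bullet> (HT *v (q - d) - F))"

text \<open>Optimal primal-dual solution: a saddle point of the Lagrangian, with the
  inequality multiplier eta ranging over the nonnegative orthant.\<close>
definition opt_primal_dual where
  "opt_primal_dual src tgt b dv c cbar d Fup Flo p q omega theta alpha lam eta nu \<longleftrightarrow>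
     (\<forall>k. eta $ k \<ge> 0) \<and>
     (\<forall>p' q' omega' theta'.
        lagrangian src tgt b dv c cbar d Fup Flo p q omega theta alpha lam eta nu
        \<le> lagrangian src tgt b dv c cbar d Fup Flo p' q' omega' theta' alpha lam eta nu) \<and>
     (\<forall>alpha' lam' eta' nu'. (\<forall>k. eta' $ k \<ge> 0) \<longrightarrow>
        lagrangian src tgt b dv c cbar d Fup Flo p q omega theta alpha' lam' eta' nu'
        \<le> lagrangian src tgt b dv c cbar d Fup Flo p q omega theta alpha lam eta nu)"

end

theory Submission imports Defs begin
lemma dot_mv: "(x::real^'m::finite) \<bullet> (A *v (y::real^'n::finite)) = (transpose A *v x) \<bullet> y"
proof -
  have "x \<bullet> (A *v y) = (\<Sum>i\<in>UNIV. \<Sum>j\<in>UNIV. x$i * A$i$j * y$j)"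
    unfolding inner_vec_def matrix_vector_mult_def by (simp add: sum_distrib_left mult.assoc)
  also have "\<dots> = (\<Sum>j\<in>UNIV. \<Sum>i\<in>UNIV. x$i * A$i$j * y$j)" by (rule sum.swap)
  also have "\<dots> = (transpose A *v x) \<bullet> y"
    unfolding inner_vec_def matrix_vector_mult_def transpose_def
    by (simp add: sum_distrib_right sum_distrib_left mult.commute mult.left_commute)
  finally show ?thesis .
qed
lemma diag_mv: "diag_mat v *v x = (\<chi> i. v$i * x$i)"
proof -
  have "\<And>i. (\<Sum>j\<in>UNIV. (if i = j then v$i else 0) * x$j) = v$i * x$i"
    by (simp add: if_distrib[of "\<lambda>t. t * _"] cong: if_cong)
  then show ?thesis unfolding diag_mat_def matrix_vector_mult_def by (simp add: vec_eq_iff)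
qed
lemma diag_dot: "(u::real^'n::finite) \<bullet> (diag_mat v *v x) = (\<Sum>i\<in>UNIV. u$i * v$i * x$i)"
  by (simp add: diag_mv inner_vec_def mult.assoc)

lemma lag_form:
  fixes src tgt :: "'e::finite \<Rightarrow> 'n::finite"
  shows "lagrangian src tgt b dv c cbar d Fup Flo p q omega theta alpha lam eta nu =
    (\<Sum>j\<in>UNIV. gen_cost (c $ j) (cbar $ j) (p $ j) - alpha$j * p$j + 1/2 * (omega$j * dv$j * omega$j)
         - nu$j * dv$j * omega$j)
    + (nu + alpha - lam *s ones + transpose (HT_mat src tgt b) *v eta) \<bullet> q
    - (transpose (incidence src tgt) *v nu) \<bullet> (diag_mat b *v theta)
    - nu \<bullet> d + lam * (ones \<bullet> d) - eta \<bullet> (HT_mat src tgt b *v d) - eta \<bullet> F_vec Fup Flo"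
proof -
  define C where "C = incidence src tgt"
  define HT where "HT = HT_mat src tgt b"
  define F where "F = F_vec Fup Flo"
  have e1: "nu \<bullet> ((C ** diag_mat b) *v theta) = (transpose C *v nu) \<bullet> (diag_mat b *v theta)"
    by (simp add: dot_mv flip: matrix_vector_mul_assoc)
  have e2: "eta \<bullet> (HT *v q) = (transpose HT *v eta) \<bullet> q" by (rule dot_mv)
  have e3: "(lam *s ones) \<bullet> q = lam * (ones \<bullet> q)"
    by (simp add: scalar_mult_eq_scaleR)
  have e4: "alpha \<bullet> p = (\<Sum>j\<in>UNIV. alpha$j * p$j)" by (simp add: inner_vec_def)
  show ?thesis
    unfolding lagrangian_def Let_def C_def[symmetric] HT_def[symmetric] F_def[symmetric]
    by (simp add: inner_diff_right inner_add_right inner_diff_left inner_add_left e1 e2 e3 e4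
        diag_dot sum.distrib sum_subtractf sum_distrib_left matrix_vector_mult_diff_distrib algebra_simps)
qed

lemma comp_ineq:
  fixes c cb a x' w' w dv :: real
  assumes "c > 0" "dv \<ge> 0"
  defines "x \<equiv> (a - cb) / c"
  shows "gen_cost c cb x - a * x + 1/2 * (w * dv * w) - w * dv * w
     \<le> gen_cost c cb x' - a * x' + 1/2 * (w' * dv * w') - w * dv * w'"
proof -
  have ax: "a = c * x + cb" using assms(1) unfolding x_def by (simp add: field_simps)
  have "gen_cost c cb x' - a * x' + 1/2 * (w' * dv * w') - w * dv * w'
      - (gen_cost c cb x - a * x + 1/2 * (w * dv * w) - w * dv * w)
      = c/2 * (x' - x)^2 + dv/2 * (w' - w)^2"
    unfolding ax gen_cost_def by (simp add: algebra_simps power2_eq_square)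
  moreover have "0 \<le> c/2 * (x' - x)^2 + dv/2 * (w' - w)^2"
    using assms by (intro add_nonneg_nonneg mult_nonneg_nonneg) auto
  ultimately show ?thesis by linarith
qed

lemma vec_self_le0: "(v::real^'k::finite) \<bullet> v \<le> 0 \<Longrightarrow> v = 0"
  by (metis inner_gt_zero_iff not_le)

lemma diag_quad_zero:
  assumes "\<forall>e. (b::real^'k::finite) $ e > 0" "w \<bullet> (diag_mat b *v w) \<le> 0"
  shows "w = 0"
proof -
  have s: "(\<Sum>i\<in>UNIV. w$i * b$i * w$i) \<le> 0" using assms(2) by (simp add: diag_dot)
  have nn: "\<forall>i\<in>UNIV. 0 \<le> w$i * b$i * w$i"
    using assms(1) by (metis less_le mult.commute mult_nonneg_nonneg zero_le_square mult.assoc)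
  have "(\<Sum>i\<in>UNIV. w$i * b$i * w$i) = 0" using s nn by (meson antisym sum_nonneg)
  then have "\<forall>i\<in>UNIV. w$i * b$i * w$i = 0" using nn by (simp add: sum_nonneg_eq_0_iff)
  then show ?thesis using assms(1) by (simp add: vec_eq_iff) (metis less_irrefl)
qed

theorem theorem4:
  fixes src tgt :: "'e::finite \<Rightarrow> 'n::finite"
    and b :: "real^'e" and dv mv tq ta :: "real^'n" and tlam :: real and te :: "real^('e + 'e)"
    and c cbar d :: "real^'n" and Fup Flo :: "real^'e" and rho :: real
    and qh :: "real^'n" and theta :: "real^'e" and lam :: real
    and omega alpha :: "real^'n" and eta :: "real^('e + 'e)"
  assumes no_loops: "\<forall>e. src e \<noteq> tgt e"
    and conn: "graph_connected src tgt"
    and b_pos: "\<forall>e. b $ e > 0"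
    and dv_pos: "\<forall>j. dv $ j > 0" and mv_pos: "\<forall>j. mv $ j > 0"
    and tq_pos: "\<forall>j. tq $ j > 0" and ta_pos: "\<forall>j. ta $ j > 0"
    and tl_pos: "tlam > 0" and te_pos: "\<forall>k. te $ k > 0"
    and c_pos: "\<forall>j. c $ j > 0" and rho_pos: "rho > 0"
    and eta_nonneg: "\<forall>k. eta $ k \<ge> 0"
  shows "is_equilibrium src tgt b dv mv tq ta tlam te c cbar d Fup Flo rho qh theta lam omega alpha eta
     \<longleftrightarrow>
     (let pr = price (H_mat src tgt b) lam eta omega;
          p = (\<chi> j. (pr $ j - cbar $ j) / c $ j);
          q = dispatch rho pr alpha qh
      in opt_primal_dual src tgt b dv c cbar d Fup Flo p q omega theta alpha lam eta omega)"
proof -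
  define C where "C = incidence src tgt"
  define HT where "HT = HT_mat src tgt b"
  define F where "F = F_vec Fup Flo"
  define pr where "pr = price (H_mat src tgt b) lam eta omega"
  define p where "p = (\<chi> j. (pr $ j - cbar $ j) / c $ j)"
  define q where "q = dispatch rho pr alpha qh"
  define r where "r = q - d - diag_mat dv *v omega - (C ** diag_mat b) *v theta"
  define y where "y = HT *v (q - d) - F"
  define Lf where "Lf = lagrangian src tgt b dv c cbar d Fup Flo"
  define g where "g = omega + alpha - lam *s ones + transpose HT *v eta"
  have pr_g: "pr - alpha = - g"
    unfolding pr_def g_def price_def H_mat_def HT_def by (simp add: algebra_simps)
  define Cond where "Cond = (transpose C *v omega = 0 \<and> r = 0 \<and> q = p \<and> pr = alpha
      \<and> ones \<bullet> (q - d) = 0 \<and> (\<forall>k. y$k \<le> 0 \<and> (eta$k > 0 \<longrightarrow> y$k = 0)))"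
  have eq1: "is_equilibrium src tgt b dv mv tq ta tlam te c cbar d Fup Flo rho qh theta lam omega alpha eta
     \<longleftrightarrow> Cond"
  proof -
    have a1: "((\<chi> j. r$j / mv$j) = 0) = (r = 0)" using mv_pos
      by (auto simp: vec_eq_iff) (metis less_irrefl)
    have a2: "((\<chi> j. (q$j - (pr$j - cbar$j) / c$j) / ta$j) = 0) = (q = p)" using ta_pos
      by (auto simp: vec_eq_iff p_def) (metis less_irrefl)
    have a3: "((\<chi> j. (pr - alpha)$j / tq$j) = 0) = (pr = alpha)" using tq_pos
      by (auto simp: vec_eq_iff) (metis less_irrefl)
    have a4: "(- (ones \<bullet> (q - d)) / tlam = 0) = (ones \<bullet> (q - d) = 0)" using tl_pos by auto
    have a5: "((\<chi> k. proj_plus y eta $ k / te $ k) = 0) = (\<forall>k. y$k \<le> 0 \<and> (eta$k > 0 \<longrightarrow> y$k = 0))"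
    proof -
      have "\<And>k. (proj_plus y eta $ k / te $ k = 0) = (y$k \<le> 0 \<and> (eta$k > 0 \<longrightarrow> y$k = 0))"
        using te_pos[rule_format] unfolding proj_plus_def
        by (auto simp: less_le)
      then show ?thesis by (simp add: vec_eq_iff)
    qed
    show ?thesis
      unfolding is_equilibrium_def vector_field_def Let_def Cond_def
      unfolding C_def[symmetric] HT_def[symmetric] F_def[symmetric] pr_def[symmetric] q_def[symmetric]
        r_def[symmetric] y_def[symmetric]
      using a1 a2 a3 a4 a5 by (simp add: zero_prod_def)
  qed
  have eq2: "opt_primal_dual src tgt b dv c cbar d Fup Flo p q omega theta alpha lam eta omega \<longleftrightarrow> Cond"
  proof
    assume opt: "opt_primal_dual src tgt b dv c cbar d Fup Flo p q omega theta alpha lam eta omega"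
    have prim: "\<And>p' q' omega' theta'. Lf p q omega theta alpha lam eta omega \<le> Lf p' q' omega' theta' alpha lam eta omega"
      using opt unfolding opt_primal_dual_def Lf_def by blast
    have dual: "\<And>alpha' lam' eta' nu'. \<forall>k. eta' $ k \<ge> 0 \<Longrightarrow>
        Lf p q omega theta alpha' lam' eta' nu' \<le> Lf p q omega theta alpha lam eta omega"
      using opt unfolding opt_primal_dual_def Lf_def by blast
    have form: "\<And>p q omega' theta. Lf p q omega' theta alpha lam eta omega = 
      (\<Sum>j\<in>UNIV. gen_cost (c $ j) (cbar $ j) (p $ j) - alpha$j * p$j + 1/2 * (omega'$j * dv$j * omega'$j)
         - omega$j * dv$j * omega'$j) + g \<bullet> q
      - (transpose C *v omega) \<bullet> (diag_mat b *v theta)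
      - omega \<bullet> d + lam * (ones \<bullet> d) - eta \<bullet> (HT *v d) - eta \<bullet> F"
      unfolding Lf_def g_def C_def HT_def F_def by (rule lag_form)
    have g0: "g = 0"
    proof -
      have "Lf p q omega theta alpha lam eta omega \<le> Lf p (q - g) omega theta alpha lam eta omega"
        by (rule prim)
      then have "g \<bullet> q \<le> g \<bullet> (q - g)" unfolding form by simp
      then have "g \<bullet> g \<le> 0" by (simp add: inner_diff_right)
      then show ?thesis by (rule vec_self_le0)
    qed
    have w0: "transpose C *v omega = 0"
    proof -
      let ?w = "transpose C *v omega"
      have "Lf p q omega theta alpha lam eta omega \<le> Lf p q omega (theta + ?w) alpha lam eta omega"
        by (rule prim)
      then have "?w \<bullet> (diag_mat b *v ?w) \<le> 0" unfolding form
        by (simp add: matrix_vector_right_distrib inner_add_right)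
      then show ?thesis using b_pos diag_quad_zero by blast
    qed
    have qp: "q = p"
    proof -
      have "Lf p q omega theta (alpha + (q - p)) lam eta omega \<le> Lf p q omega theta alpha lam eta omega"
        using eta_nonneg by (rule dual)
      then have "(q - p) \<bullet> (q - p) \<le> 0"
        unfolding Lf_def lagrangian_def Let_def by (simp add: inner_add_left)
      then have "q - p = 0" by (rule vec_self_le0)
      then show ?thesis by simp
    qed
    have r0: "r = 0"
    proof -
      have "Lf p q omega theta alpha lam eta (omega + r) \<le> Lf p q omega theta alpha lam eta omega"
        using eta_nonneg by (rule dual)
      then have "r \<bullet> r \<le> 0"
        unfolding Lf_def lagrangian_def Let_def r_def C_def by (simp add: inner_add_left)
      then show ?thesis by (rule vec_self_le0)
    qed
    have s0: "ones \<bullet> (q - d) = 0"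
    proof -
      let ?s = "ones \<bullet> (q - d)"
      have "Lf p q omega theta alpha (lam - ?s) eta omega \<le> Lf p q omega theta alpha lam eta omega"
        using eta_nonneg by (rule dual)
      then have "?s * ?s \<le> 0"
        unfolding Lf_def lagrangian_def Let_def by (simp add: algebra_simps)
      then show ?thesis by (metis mult_eq_0_iff not_le not_square_less_zero antisym)
    qed
    have yk: "\<forall>k. y$k \<le> 0 \<and> (eta$k > 0 \<longrightarrow> y$k = 0)"
    proof
      fix k
      have "Lf p q omega theta alpha lam (eta + axis k 1) omega \<le> Lf p q omega theta alpha lam eta omega"
        using eta_nonneg by (intro dual) (simp add: axis_def)
      then have y1: "y$k \<le> 0"
        unfolding Lf_def lagrangian_def Let_def y_def HT_def F_def
        by (simp add: inner_add_left inner_axis')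
      have "Lf p q omega theta alpha lam (eta - axis k (eta$k)) omega \<le> Lf p q omega theta alpha lam eta omega"
        using eta_nonneg by (intro dual) (simp add: axis_def)
      then have "- (eta$k * y$k) \<le> 0"
        unfolding Lf_def lagrangian_def Let_def y_def HT_def F_def
        by (simp add: inner_diff_left inner_axis')
      then have "eta$k > 0 \<longrightarrow> y$k \<ge> 0" by (auto simp add: zero_le_mult_iff)
      then show "y$k \<le> 0 \<and> (eta$k > 0 \<longrightarrow> y$k = 0)" using y1 by auto
    qed
    have "pr = alpha" using pr_g g0 by simp
    then show Cond unfolding Cond_def using w0 r0 qp s0 yk by blast
  next
    assume Cond
    then have w0: "transpose C *v omega = 0" and r0: "r = 0" and qp: "q = p" and pa: "pr = alpha"
      and s0: "ones \<bullet> (q - d) = 0" and yk: "\<forall>k. y$k \<le> 0 \<and> (eta$k > 0 \<longrightarrow> y$k = 0)"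
      unfolding Cond_def by auto
    have g0: "g = 0" using pr_g pa by simp
    have form: "\<And>p q omega' theta. Lf p q omega' theta alpha lam eta omega = 
      (\<Sum>j\<in>UNIV. gen_cost (c $ j) (cbar $ j) (p $ j) - alpha$j * p$j + 1/2 * (omega'$j * dv$j * omega'$j)
         - omega$j * dv$j * omega'$j) + g \<bullet> q
      - (transpose C *v omega) \<bullet> (diag_mat b *v theta)
      - omega \<bullet> d + lam * (ones \<bullet> d) - eta \<bullet> (HT *v d) - eta \<bullet> F"
      unfolding Lf_def g_def C_def HT_def F_def by (rule lag_form)
    have prim: "Lf p q omega theta alpha lam eta omega \<le> Lf p' q' omega' theta' alpha lam eta omega"
      for p' q' omega' theta'
    proof -
      have "(\<Sum>j\<in>UNIV. gen_cost (c $ j) (cbar $ j) (p $ j) - alpha$j * p$j + 1/2 * (omega$j * dv$j * omega$j)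
         - omega$j * dv$j * omega$j) \<le> (\<Sum>j\<in>UNIV. gen_cost (c $ j) (cbar $ j) (p' $ j) - alpha$j * p'$j + 1/2 * (omega'$j * dv$j * omega'$j)
         - omega$j * dv$j * omega'$j)"
      proof (rule sum_mono)
        fix j
        have pj: "p$j = (alpha$j - cbar$j) / c$j" using pa by (simp add: p_def)
        show "gen_cost (c $ j) (cbar $ j) (p $ j) - alpha$j * p$j + 1/2 * (omega$j * dv$j * omega$j)
         - omega$j * dv$j * omega$j \<le> gen_cost (c $ j) (cbar $ j) (p' $ j) - alpha$j * p'$j + 1/2 * (omega'$j * dv$j * omega'$j)
         - omega$j * dv$j * omega'$j"
          unfolding pj by (rule comp_ineq) (use c_pos dv_pos in \<open>auto simp: less_imp_le\<close>)
      qed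
      then show ?thesis unfolding form g0 w0 by simp
    qed
    have dual: "Lf p q omega theta alpha' lam' eta' nu' \<le> Lf p q omega theta alpha lam eta omega"
      if nn: "\<forall>k. eta' $ k \<ge> 0" for alpha' lam' eta' nu'
    proof -
      have base: "\<And>a l e n. Lf p q omega theta a l e n = (\<Sum>j\<in>UNIV. gen_cost (c $ j) (cbar $ j) (p $ j))
         + 1/2 * (omega \<bullet> (diag_mat dv *v omega)) + e \<bullet> y"
        using r0 qp s0 unfolding Lf_def lagrangian_def Let_def r_def y_def C_def HT_def F_def by simp
      have "eta' \<bullet> y \<le> 0" unfolding inner_vec_def
        using nn yk by (intro sum_nonpos) (simp add: mult_nonneg_nonpos)
      moreover have "eta \<bullet> y = 0" unfolding inner_vec_def
        proof (intro sum.neutral ballI)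
        fix k
        show "eta$k \<bullet> y$k = 0"
        proof (cases "eta$k = 0")
          case False
          then have "eta$k > 0" using eta_nonneg by (simp add: less_le)
          then show ?thesis using yk by simp
        qed (simp add: inner_real_def)
      qed
      ultimately show ?thesis unfolding base by simp
    qed
    show "opt_primal_dual src tgt b dv c cbar d Fup Flo p q omega theta alpha lam eta omega"
      unfolding opt_primal_dual_def using eta_nonneg prim dual unfolding Lf_def by blast
  qed
  show ?thesis unfolding Let_def pr_def[symmetric] p_def[symmetric] q_def[symmetric]
    using eq1 eq2 by simp
qed
end
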